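(* Let $d\ge 3$ and let $G$ be a group with a faithful self-similar action on $\mathcal{T}_{d-1}$. Then for every $1\le i\le d$, $G$ admits a faithful action on $\mathcal{T}_d$ whose image in $\mathrm{Aut}(\mathcal{T}_d)$ is self-similar and $i$-persistent, and which is finite-state if the action on $\mathcal{T}_{d-1}$ is finite-state, and coarsely diagonal if the action on $\mathcal{T}_{d-1}$ is coarsely diagonal.
   Context: For $m\ge2$, $\mathcal{T}_m$ is the rooted $m$-ary tree with vertex set the finite words over $\{1,\dots,m\}$. Every $f\in\mathrm{Aut}(\mathcal{T}_m)$ has a wreath recursion $f=\rho(f)(f_1,\dots,f_m)$ with $\rho(f)\in S_m$ and $f_j\in\mathrm{Aut}(\mathcal{T}_m)$ determined by $f(jw)=\rho(f)(j)f_j(w)$; the $f_j$ are the level-1 states, and the states of $f$ form the smallest set containing $f$ and closed under taking level-1 states. A subset of $\mathrm{Aut}(\mathcal{T}_m)$ is self-similar if it contains all states of its elements; finite-state if each element has finitely many states. A subgroup $H$ is coarsely diagonal if $(h')^{-1}h$ has finite order for all $h\in H$ and states $h'$ of $h$; $h$ is $i$-persistent if $h_i=h$ in its wreath recursion, and $H$ is $i$-persistent if all its elements are. A group action on a tree is said to have one of these properties if it is faithful and its image in the automorphism group has the property. *)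

theory Defs
  imports "HOL-Algebra.Group" "HOL-Library.Sublist"
begin

definition words :: "nat \<Rightarrow> nat list set" where
  "words m = lists {1..m}"

text \<open>Automorphisms of the rooted m-ary tree, represented as functions on nat lists
  which are bijective on the vertex set, preserve word length and the prefix
  (ancestor) relation, and are the identity outside the vertex set (so that equality
  of automorphisms is equality of functions).\<close>
definition tree_aut :: "nat \<Rightarrow> (nat list \<Rightarrow> nat list) \<Rightarrow> bool" where
  "tree_aut m f \<longleftrightarrow>
     bij_betw f (words m) (words m) \<and>
     (\<forall>w\<in>words m. length (f w) = length w) \<and>
     (\<forall>u\<in>words m. \<forall>v\<in>words m. prefix (f u) (f (u @ v))) \<and>
     (\<forall>w. w \<notin> words m \<longrightarrow> f w = w)"

text \<open>Level-1 state f_j, determined by f(jw) = rho(f)(j) f_j(w).\<close>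
definition state :: "nat \<Rightarrow> (nat list \<Rightarrow> nat list) \<Rightarrow> nat \<Rightarrow> (nat list \<Rightarrow> nat list)" where
  "state m f j = (\<lambda>w. if w \<in> words m then tl (f (j # w)) else w)"

inductive_set states :: "nat \<Rightarrow> (nat list \<Rightarrow> nat list) \<Rightarrow> (nat list \<Rightarrow> nat list) set"
  for m f where
  self: "f \<in> states m f"
| step: "g \<in> states m f \<Longrightarrow> j \<in> {1..m} \<Longrightarrow> state m g j \<in> states m f"

definition self_similar :: "nat \<Rightarrow> (nat list \<Rightarrow> nat list) set \<Rightarrow> bool" where
  "self_similar m S \<longleftrightarrow> (\<forall>f\<in>S. states m f \<subseteq> S)"

definition finite_state :: "nat \<Rightarrow> (nat list \<Rightarrow> nat list) set \<Rightarrow> bool" where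
  "finite_state m S \<longleftrightarrow> (\<forall>f\<in>S. finite (states m f))"

definition coarsely_diagonal :: "nat \<Rightarrow> (nat list \<Rightarrow> nat list) set \<Rightarrow> bool" where
  "coarsely_diagonal m H \<longleftrightarrow>
     (\<forall>h\<in>H. \<forall>h'\<in>states m h. \<exists>n>0. (Hilbert_Choice.inv h' \<circ> h) ^^ n = id)"

definition persistent :: "nat \<Rightarrow> nat \<Rightarrow> (nat list \<Rightarrow> nat list) set \<Rightarrow> bool" where
  "persistent m i H \<longleftrightarrow> (\<forall>h\<in>H. state m h i = h)"

definition tree_action :: "nat \<Rightarrow> ('g, 'b) monoid_scheme \<Rightarrow> ('g \<Rightarrow> nat list \<Rightarrow> nat list) \<Rightarrow> bool" where
  "tree_action m G \<phi> \<longleftrightarrow>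
     (\<forall>g\<in>carrier G. tree_aut m (\<phi> g)) \<and>
     (\<forall>g\<in>carrier G. \<forall>h\<in>carrier G. \<phi> (g \<otimes>\<^bsub>G\<^esub> h) = \<phi> g \<circ> \<phi> h)"

definition faithful_action :: "nat \<Rightarrow> ('g, 'b) monoid_scheme \<Rightarrow> ('g \<Rightarrow> nat list \<Rightarrow> nat list) \<Rightarrow> bool" where
  "faithful_action m G \<phi> \<longleftrightarrow> tree_action m G \<phi> \<and> inj_on \<phi> (carrier G)"

end

theory Submission
  imports Defs
begin

definition tau :: "nat \<Rightarrow> nat \<Rightarrow> nat" where "tau i j = (if j < i then j else Suc j)"
definition tinv :: "nat \<Rightarrow> nat \<Rightarrow> nat" where "tinv i a = (if a < i then a else a - 1)"

fun mrg :: "nat \<Rightarrow> nat list \<Rightarrow> nat list \<Rightarrow> nat list" where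
  "mrg i [] ys = []"
| "mrg i (x # xs) ys = (if x = i then i # mrg i xs ys else hd ys # mrg i xs (tl ys))"

definition flt :: "nat \<Rightarrow> nat list \<Rightarrow> nat list" where
  "flt i w = map (tinv i) (filter (\<lambda>x. x \<noteq> i) w)"

definition lift :: "nat \<Rightarrow> nat \<Rightarrow> (nat list \<Rightarrow> nat list) \<Rightarrow> nat list \<Rightarrow> nat list" where
  "lift d i f w = (if w \<in> words d then mrg i w (map (tau i) (f (flt i w))) else w)"

lemma length_mrg[simp]: "length (mrg i w ys) = length w"
  by (induction w arbitrary: ys) auto

lemma tinv_tau[simp]: "tinv i (tau i j) = j"
  by (simp add: tinv_def tau_def)

lemma tinv_tau_comp[simp]: "tinv i \<circ> tau i = id"
  by (rule ext) simp

lemma tau_neq[simp]: "tau i j \<noteq> i"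
  by (simp add: tau_def)

lemma tau_neq'[simp]: "i \<noteq> tau i j"
  by (simp add: tau_def)

lemma tau_tinv: "a \<noteq> i \<Longrightarrow> tau i (tinv i a) = a"
  by (auto simp: tinv_def tau_def)

lemma map_tau_flt: "map (tau i) (flt i w) = filter (\<lambda>x. x \<noteq> i) w"
  by (induction w) (auto simp: flt_def tau_tinv)

lemma map_tinv_tau[simp]: "map (tinv i) (map (tau i) x) = x"
  by (induction x) auto

lemma length_flt: "length (flt i w) = length (filter (\<lambda>x. x \<noteq> i) w)"
  by (simp add: flt_def)

lemma flt_words: "w \<in> words d \<Longrightarrow> 1 \<le> i \<Longrightarrow> i \<le> d \<Longrightarrow> flt i w \<in> words (d - 1)"
  by (induction w) (auto simp: words_def flt_def tinv_def)

lemma tau_range: "j \<in> {1..d-1} \<Longrightarrow> 1 \<le> i \<Longrightarrow> i \<le> d \<Longrightarrow> tau i j \<in> {1..d}"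
  by (auto simp: tau_def)

lemma tinv_range: "j \<in> {1..d} \<Longrightarrow> j \<noteq> i \<Longrightarrow> 1 \<le> i \<Longrightarrow> i \<le> d \<Longrightarrow> tinv i j \<in> {1..d-1}"
  by (auto simp: tinv_def)

lemma mrg_words: "w \<in> words d \<Longrightarrow> ys \<in> lists {1..d} \<Longrightarrow> length ys \<ge> length (filter (\<lambda>x. x \<noteq> i) w)
   \<Longrightarrow> i \<in> {1..d} \<Longrightarrow> mrg i w ys \<in> words d"
proof (induction w arbitrary: ys)
  case Nil then show ?case by (simp add: words_def)
next
  case (Cons x w)
  show ?case
  proof (cases "x = i")
    case True then show ?thesis using Cons by (auto simp: words_def)
  next
    case False
    then obtain y ys' where ys: "ys = y # ys'" using Cons.prems by (cases ys) auto
    then show ?thesis using Cons False by (auto simp: words_def)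
  qed
qed

lemma filter_mrg: "i \<notin> set ys \<Longrightarrow> length ys = length (filter (\<lambda>x. x \<noteq> i) w) \<Longrightarrow>
   filter (\<lambda>x. x \<noteq> i) (mrg i w ys) = ys"
proof (induction w arbitrary: ys)
  case (Cons x w) then show ?case by (cases "x = i"; cases ys) auto
qed auto

lemma mrg_mrg: "i \<notin> set ys \<Longrightarrow> length ys = length (filter (\<lambda>x. x \<noteq> i) w) \<Longrightarrow>
   mrg i (mrg i w ys) zs = mrg i w zs"
proof (induction w arbitrary: ys zs)
  case (Cons x w) then show ?case by (cases "x = i"; cases ys) auto
qed auto

lemma mrg_filter: "mrg i w (filter (\<lambda>x. x \<noteq> i) w) = w"
  by (induction w) auto

lemma mrg_append: "length ys = length (filter (\<lambda>x. x \<noteq> i) u) \<Longrightarrow>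
   mrg i (u @ v) (ys @ zs) = mrg i u ys @ mrg i v zs"
proof (induction u arbitrary: ys)
  case (Cons x u)
  show ?case
  proof (cases "x = i")
    case True then show ?thesis using Cons by simp
  next
    case False then show ?thesis using Cons by (cases ys) auto
  qed
qed auto

lemma mrg_noi: "i \<notin> set w \<Longrightarrow> length ys = length w \<Longrightarrow> mrg i w ys = ys"
proof (induction w arbitrary: ys)
  case (Cons x w) then show ?case by (cases "x = i"; cases ys) auto
qed auto

definition good :: "nat \<Rightarrow> (nat list \<Rightarrow> nat list) \<Rightarrow> bool" where
  "good m f \<longleftrightarrow> (\<forall>w\<in>words m. f w \<in> words m \<and> length (f w) = length w)"

lemma lift_words:
  assumes "good (d-1) f" "w \<in> words d" "i \<in> {1..d}"
  shows "lift d i f w \<in> words d"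
proof -
  have fw: "flt i w \<in> words (d-1)" using flt_words assms by auto
  then have "f (flt i w) \<in> words (d-1)" "length (f (flt i w)) = length (flt i w)"
    using assms(1) by (auto simp: good_def)
  moreover have "map (tau i) (f (flt i w)) \<in> lists {1..d}"
    using calculation(1) assms(3) tau_range[of _ d i] by (auto simp: words_def)
  ultimately show ?thesis using assms
    by (auto simp: lift_def length_flt intro!: mrg_words)
qed

lemma lift_length[simp]: "length (lift d i f w) = length w"
  by (simp add: lift_def)

lemma lift_comp:
  assumes "good (d-1) g" "i \<in> {1..d}"
  shows "lift d i f (lift d i g w) = lift d i (f \<circ> g) w"
proof (cases "w \<in> words d")
  case False then show ?thesis by (simp add: lift_def)
next
  case True
  have fw: "flt i w \<in> words (d-1)" using flt_words assms True by auto
  then have len: "length (g (flt i w)) = length (flt i w)" using assms(1) by (auto simp: good_def)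
  have lw: "lift d i g w \<in> words d" using lift_words assms True by blast
  let ?ys = "map (tau i) (g (flt i w))"
  have ni: "i \<notin> set ?ys" by (force simp: tau_def)
  have ly: "length ?ys = length (filter (\<lambda>x. x \<noteq> i) w)" using len by (simp add: length_flt)
  have "flt i (lift d i g w) = g (flt i w)"
    using True filter_mrg[OF ni ly] by (simp add: lift_def flt_def)
  then show ?thesis using True lw mrg_mrg[OF ni ly] by (simp add: lift_def)
qed

lemma lift_id: "lift d i id = id"
  by (rule ext) (simp add: lift_def map_tau_flt mrg_filter)

lemma lift_state:
  assumes "j \<noteq> i" "j \<in> {1..d}" "i \<in> {1..d}"
  shows "state d (lift d i f) j = lift d i (state (d-1) f (tinv i j))"
proof (rule ext)
  fix w
  show "state d (lift d i f) j w = lift d i (state (d-1) f (tinv i j)) w"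
  proof (cases "w \<in> words d")
    case False then show ?thesis by (simp add: state_def lift_def)
  next
    case True
    have jw: "j # w \<in> words d" using True assms by (simp add: words_def)
    have fw: "flt i w \<in> words (d-1)" using flt_words assms True by auto
    have "flt i (j # w) = tinv i j # flt i w" using assms by (simp add: flt_def)
    then show ?thesis using True jw fw assms
      by (simp add: state_def lift_def map_tl)
  qed
qed

lemma lift_persist:
  assumes "i \<in> {1..d}"
  shows "state d (lift d i f) i = lift d i f"
proof (rule ext)
  fix w
  show "state d (lift d i f) i w = lift d i f w"
  proof (cases "w \<in> words d")
    case False then show ?thesis by (simp add: state_def lift_def)
  next
    case True
    have jw: "i # w \<in> words d" using True assms by (simp add: words_def)
    have "flt i (i # w) = flt i w" by (simp add: flt_def)
    then show ?thesis using True jw by (simp add: state_def lift_def)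
  qed
qed

lemma lift_states:
  assumes "i \<in> {1..d}" "g \<in> states d (lift d i f)"
  shows "\<exists>f'\<in>states (d-1) f. g = lift d i f'"
  using assms(2)
proof (induction rule: states.induct)
  case self then show ?case using states.self by blast
next
  case (step g j)
  then obtain f' where f': "f' \<in> states (d-1) f" "g = lift d i f'" by blast
  show ?case
  proof (cases "j = i")
    case True then show ?thesis using f' lift_persist[OF assms(1)] by auto
  next
    case False
    have "tinv i j \<in> {1..d-1}" using tinv_range False step assms by auto
    then show ?thesis using f' lift_state[OF False \<open>j \<in> {1..d}\<close> assms(1)] states.step[OF f'(1)] by blast
  qed
qed

lemma lift_map_tau:
  assumes "good (d-1) f" "w \<in> words (d-1)" "i \<in> {1..d}"
  shows "lift d i f (map (tau i) w) = map (tau i) (f w)"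
proof -
  have "map (tau i) w \<in> words d" using assms tau_range[of _ d i] by (auto simp: words_def)
  moreover have "flt i (map (tau i) w) = w"
    by (simp add: flt_def filter_True[where xs="map (tau i) w"] del: filter_map)
  moreover have "length (f w) = length w" using assms by (auto simp: good_def)
  ultimately show ?thesis by (auto simp: lift_def intro!: mrg_noi)
qed

lemma lift_inj:
  assumes "good (d-1) f1" "good (d-1) f2" "i \<in> {1..d}"
    "\<forall>w. w \<notin> words (d-1) \<longrightarrow> f1 w = w" "\<forall>w. w \<notin> words (d-1) \<longrightarrow> f2 w = w"
    "lift d i f1 = lift d i f2"
  shows "f1 = f2"
proof (rule ext)
  fix w
  show "f1 w = f2 w"
  proof (cases "w \<in> words (d-1)")
    case True
    have "map (tau i) (f1 w) = map (tau i) (f2 w)"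
      using lift_map_tau[OF assms(1) True assms(3)] lift_map_tau[OF assms(2) True assms(3)] assms(6)
      by metis
    then show ?thesis by (metis map_tinv_tau)
  qed (use assms in auto)
qed

lemma good_aut: "tree_aut m f \<Longrightarrow> good m f"
  by (auto simp: tree_aut_def good_def bij_betw_def)

lemma phi_one:
  assumes "group G" "tree_action m G \<phi>"
  shows "\<phi> \<one>\<^bsub>G\<^esub> = id"
proof -
  let ?e = "\<phi> \<one>\<^bsub>G\<^esub>"
  have one: "\<one>\<^bsub>G\<^esub> \<in> carrier G" using assms(1) by (simp add: group.is_monoid monoid.one_closed)
  have ta: "tree_aut m ?e" using assms one by (simp add: tree_action_def)
  have ee: "?e = ?e \<circ> ?e" using assms one
    by (metis group.is_monoid monoid.l_one tree_action_def)
  show ?thesis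
  proof (rule ext)
    fix w
    show "?e w = id w"
    proof (cases "w \<in> words m")
      case True
      have "?e w \<in> words m" using ta True by (auto simp: tree_aut_def bij_betw_def)
      moreover have "?e (?e w) = ?e w" using ee by (metis comp_apply)
      moreover have "inj_on ?e (words m)" using ta by (simp add: tree_aut_def bij_betw_def)
      ultimately show ?thesis using True by (simp add: inj_on_def)
    next
      case False then show ?thesis using ta by (simp add: tree_aut_def)
    qed
  qed
qed

lemma hom_inv:
  assumes "group G" "\<forall>x\<in>carrier G. \<forall>y\<in>carrier G. \<rho> (x \<otimes>\<^bsub>G\<^esub> y) = \<rho> x \<circ> \<rho> y"
    "\<rho> \<one>\<^bsub>G\<^esub> = id" "g \<in> carrier G"
  shows "Hilbert_Choice.inv (\<rho> g) = \<rho> (inv\<^bsub>G\<^esub> g)"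
proof (rule inv_equality)
  have ic: "inv\<^bsub>G\<^esub> g \<in> carrier G" using assms by (simp add: group.inv_closed)
  fix x
  have "\<rho> (inv\<^bsub>G\<^esub> g \<otimes>\<^bsub>G\<^esub> g) = id" using assms by (simp add: group.l_inv)
  then show "\<rho> (inv\<^bsub>G\<^esub> g) (\<rho> g x) = x" using assms ic by (metis comp_apply id_apply)
next
  have ic: "inv\<^bsub>G\<^esub> g \<in> carrier G" using assms by (simp add: group.inv_closed)
  fix y
  have "\<rho> (g \<otimes>\<^bsub>G\<^esub> inv\<^bsub>G\<^esub> g) = id" using assms by (simp add: group.r_inv)
  then show "\<rho> g (\<rho> (inv\<^bsub>G\<^esub> g) y) = y" using assms ic by (metis comp_apply id_apply)
qed

lemma hom_pow:
  assumes "group G" "\<forall>x\<in>carrier G. \<forall>y\<in>carrier G. \<rho> (x \<otimes>\<^bsub>G\<^esub> y) = \<rho> x \<circ> \<rho> y"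
    "\<rho> \<one>\<^bsub>G\<^esub> = id" "k \<in> carrier G"
  shows "\<rho> k ^^ n = \<rho> (k [^]\<^bsub>G\<^esub> n)"
proof (induction n)
  case 0 then show ?case using assms by simp
next
  case (Suc n)
  have "k [^]\<^bsub>G\<^esub> n \<in> carrier G" using assms by (simp add: group.is_monoid monoid.nat_pow_closed)
  have "\<rho> k ^^ Suc n = \<rho> k ^^ n \<circ> \<rho> k" by (rule funpow_Suc_right)
  also have "\<dots> = \<rho> (k [^]\<^bsub>G\<^esub> n) \<circ> \<rho> k" using Suc by simp
  also have "\<dots> = \<rho> (k [^]\<^bsub>G\<^esub> Suc n)" using assms \<open>k [^]\<^bsub>G\<^esub> n \<in> carrier G\<close> by simp
  finally show ?case .
qed

lemma cd_transfer:
  assumes "group G"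
    "\<forall>x\<in>carrier G. \<forall>y\<in>carrier G. \<rho> (x \<otimes>\<^bsub>G\<^esub> y) = \<rho> x \<circ> \<rho> y" "\<rho> \<one>\<^bsub>G\<^esub> = id"
    "\<forall>x\<in>carrier G. \<forall>y\<in>carrier G. \<sigma> (x \<otimes>\<^bsub>G\<^esub> y) = \<sigma> x \<circ> \<sigma> y" "\<sigma> \<one>\<^bsub>G\<^esub> = id"
    "inj_on \<rho> (carrier G)" "g \<in> carrier G" "g' \<in> carrier G"
    "(Hilbert_Choice.inv (\<rho> g') \<circ> \<rho> g) ^^ n = id"
  shows "(Hilbert_Choice.inv (\<sigma> g') \<circ> \<sigma> g) ^^ n = id"
proof -
  define k where "k = inv\<^bsub>G\<^esub> g' \<otimes>\<^bsub>G\<^esub> g"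
  have kc: "k \<in> carrier G" using assms by (simp add: k_def group.inv_closed group.is_monoid monoid.m_closed)
  have ic: "inv\<^bsub>G\<^esub> g' \<in> carrier G" using assms by (simp add: group.inv_closed)
  have r: "Hilbert_Choice.inv (\<rho> g') \<circ> \<rho> g = \<rho> k"
    using hom_inv[of G \<rho> g'] assms ic by (simp add: k_def)
  have s: "Hilbert_Choice.inv (\<sigma> g') \<circ> \<sigma> g = \<sigma> k"
    using hom_inv[of G \<sigma> g'] assms ic by (simp add: k_def)
  have pc: "k [^]\<^bsub>G\<^esub> n \<in> carrier G" using assms kc by (simp add: group.is_monoid monoid.nat_pow_closed)
  have "\<rho> (k [^]\<^bsub>G\<^esub> n) = \<rho> \<one>\<^bsub>G\<^esub>"
    using assms r hom_pow[of G \<rho> k n] kc by simp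
  then have "k [^]\<^bsub>G\<^esub> n = \<one>\<^bsub>G\<^esub>" using assms(6) pc
    by (meson assms(1) group.is_monoid inj_onD monoid.one_closed)
  then show ?thesis using s hom_pow[of G \<sigma> k n] assms kc by simp
qed

theorem lemma5p3:
  fixes G :: "('g, 'b) monoid_scheme" and d :: nat and \<phi> :: "'g \<Rightarrow> nat list \<Rightarrow> nat list"
  assumes "d \<ge> 3" and "group G"
    and "faithful_action (d - 1) G \<phi>"
    and "self_similar (d - 1) (\<phi> ` carrier G)"
  shows "\<forall>i\<in>{1..d}. \<exists>\<psi> :: 'g \<Rightarrow> nat list \<Rightarrow> nat list.
           faithful_action d G \<psi> \<and>
           self_similar d (\<psi> ` carrier G) \<and>
           persistent d i (\<psi> ` carrier G) \<and>
           (finite_state (d - 1) (\<phi> ` carrier G) \<longrightarrow> finite_state d (\<psi> ` carrier G)) \<and>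
           (coarsely_diagonal (d - 1) (\<phi> ` carrier G) \<longrightarrow> coarsely_diagonal d (\<psi> ` carrier G))"
proof
  fix i assume i: "i \<in> {1..d}"
  have grp: "group G" by fact
  have ta: "tree_action (d-1) G \<phi>" and injp: "inj_on \<phi> (carrier G)"
    using assms(3) by (auto simp: faithful_action_def)
  have aut: "\<And>g. g \<in> carrier G \<Longrightarrow> tree_aut (d-1) (\<phi> g)" using ta by (simp add: tree_action_def)
  have gd: "\<And>g. g \<in> carrier G \<Longrightarrow> good (d-1) (\<phi> g)" using aut good_aut by blast
  have homp: "\<forall>x\<in>carrier G. \<forall>y\<in>carrier G. \<phi> (x \<otimes>\<^bsub>G\<^esub> y) = \<phi> x \<circ> \<phi> y"
    using ta by (simp add: tree_action_def)
  have onep: "\<phi> \<one>\<^bsub>G\<^esub> = id" using phi_one[OF grp ta] .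
  define \<psi> where "\<psi> = (\<lambda>g. lift d i (\<phi> g))"
  have homs: "\<forall>x\<in>carrier G. \<forall>y\<in>carrier G. \<psi> (x \<otimes>\<^bsub>G\<^esub> y) = \<psi> x \<circ> \<psi> y"
  proof (intro ballI)
    fix x y assume xy: "x \<in> carrier G" "y \<in> carrier G"
    show "\<psi> (x \<otimes>\<^bsub>G\<^esub> y) = \<psi> x \<circ> \<psi> y"
      using lift_comp[OF gd[OF xy(2)] i] homp xy by (auto simp: \<psi>_def)
  qed
  have ones: "\<psi> \<one>\<^bsub>G\<^esub> = id" using onep lift_id by (simp add: \<psi>_def)
  have tas: "tree_aut d (\<psi> g)" if g: "g \<in> carrier G" for g
  proof -
    have ig: "inv\<^bsub>G\<^esub> g \<in> carrier G" using grp g by (simp add: group.inv_closed)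
    have w1: "\<And>w. w \<in> words d \<Longrightarrow> \<psi> g w \<in> words d"
      using lift_words[OF gd[OF g] _ i] by (simp add: \<psi>_def)
    have w2: "\<And>w. w \<in> words d \<Longrightarrow> \<psi> (inv\<^bsub>G\<^esub> g) w \<in> words d"
      using lift_words[OF gd[OF ig] _ i] by (simp add: \<psi>_def)
    have c1: "\<psi> (inv\<^bsub>G\<^esub> g) (\<psi> g w) = w" for w
    proof -
      have "\<psi> (inv\<^bsub>G\<^esub> g \<otimes>\<^bsub>G\<^esub> g) = id" using grp g ones by (simp add: group.l_inv)
      then show ?thesis using homs g ig by (metis comp_apply id_apply)
    qed
    have c2: "\<psi> g (\<psi> (inv\<^bsub>G\<^esub> g) w) = w" for w
    proof -
      have "\<psi> (g \<otimes>\<^bsub>G\<^esub> inv\<^bsub>G\<^esub> g) = id" using grp g ones by (simp add: group.r_inv)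
      then show ?thesis using homs g ig by (metis comp_apply id_apply)
    qed
    have bij: "bij_betw (\<psi> g) (words d) (words d)"
      by (rule bij_betw_byWitness[where f'="\<psi> (inv\<^bsub>G\<^esub> g)"]) (use c1 c2 w1 w2 in auto)
    have pre: "prefix (\<psi> g u) (\<psi> g (u @ v))" if uv: "u \<in> words d" "v \<in> words d" for u v
    proof -
      let ?f = "\<phi> g"
      have uvw: "u @ v \<in> words d" using uv by (simp add: words_def)
      have fu: "flt i u \<in> words (d-1)" and fv: "flt i v \<in> words (d-1)"
        using flt_words uv i by auto
      have "prefix (?f (flt i u)) (?f (flt i u @ flt i v))"
        using aut[OF g] fu fv by (simp add: tree_aut_def)
      then obtain r where r: "?f (flt i u @ flt i v) = ?f (flt i u) @ r"
        by (auto simp: prefix_def)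
      have len: "length (map (tau i) (?f (flt i u))) = length (filter (\<lambda>x. x \<noteq> i) u)"
        using gd[OF g] fu by (simp add: good_def length_flt)
      have "flt i (u @ v) = flt i u @ flt i v" by (simp add: flt_def)
      then have "\<psi> g (u @ v) = mrg i u (map (tau i) (?f (flt i u))) @ mrg i v (map (tau i) r)"
        using uvw r mrg_append[OF len] by (simp add: \<psi>_def lift_def)
      moreover have "\<psi> g u = mrg i u (map (tau i) (?f (flt i u)))"
        using uv by (simp add: \<psi>_def lift_def)
      ultimately show ?thesis by simp
    qed
    show ?thesis unfolding tree_aut_def
      using bij pre by (auto simp: \<psi>_def lift_def)
  qed
  have faith: "faithful_action d G \<psi>"
    unfolding faithful_action_def tree_action_def
  proof (intro conjI ballI)
    show "inj_on \<psi> (carrier G)"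
    proof (rule inj_onI)
      fix x y assume xy: "x \<in> carrier G" "y \<in> carrier G" "\<psi> x = \<psi> y"
      have "\<phi> x = \<phi> y"
        using lift_inj[OF gd[OF xy(1)] gd[OF xy(2)] i] aut[OF xy(1)] aut[OF xy(2)] xy(3)
        by (simp add: tree_aut_def \<psi>_def)
      then show "x = y" using injp xy by (meson inj_onD)
    qed
  qed (use tas homs in auto)
  have stsub: "states d (\<psi> g) \<subseteq> (lift d i) ` states (d-1) (\<phi> g)" for g
    using lift_states[OF i] by (auto simp: \<psi>_def)
  have ss: "self_similar d (\<psi> ` carrier G)"
    unfolding self_similar_def
  proof (intro ballI subsetI)
    fix h k assume h: "h \<in> \<psi> ` carrier G" and k: "k \<in> states d h"
    then obtain g where g: "g \<in> carrier G" "h = \<psi> g" by auto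
    then obtain f' where f': "f' \<in> states (d-1) (\<phi> g)" "k = lift d i f'" using stsub k by blast
    then have "f' \<in> \<phi> ` carrier G" using assms(4) g by (auto simp: self_similar_def)
    then show "k \<in> \<psi> ` carrier G" using f' by (auto simp: \<psi>_def)
  qed
  have pers: "persistent d i (\<psi> ` carrier G)"
    using lift_persist[OF i] by (auto simp: persistent_def \<psi>_def)
  have fs: "finite_state (d - 1) (\<phi> ` carrier G) \<longrightarrow> finite_state d (\<psi> ` carrier G)"
    unfolding finite_state_def
  proof (intro impI ballI)
    fix h assume fp: "\<forall>f\<in>\<phi> ` carrier G. finite (states (d - 1) f)" and h: "h \<in> \<psi> ` carrier G"
    then obtain g where g: "g \<in> carrier G" "h = \<psi> g" by auto
    have "finite (lift d i ` states (d-1) (\<phi> g))" using fp g by auto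
    then show "finite (states d h)" using stsub[of g] g finite_subset by blast
  qed
  have cd: "coarsely_diagonal (d - 1) (\<phi> ` carrier G) \<longrightarrow> coarsely_diagonal d (\<psi> ` carrier G)"
  proof
    assume cdp: "coarsely_diagonal (d - 1) (\<phi> ` carrier G)"
    show "coarsely_diagonal d (\<psi> ` carrier G)"
      unfolding coarsely_diagonal_def
    proof (intro ballI)
      fix h h' assume h: "h \<in> \<psi> ` carrier G" and h': "h' \<in> states d h"
      then obtain g where g: "g \<in> carrier G" "h = \<psi> g" by auto
      then obtain f' where f': "f' \<in> states (d-1) (\<phi> g)" "h' = lift d i f'" using stsub h' by blast
      then have "f' \<in> \<phi> ` carrier G" using assms(4) g by (auto simp: self_similar_def)
      then obtain g' where g': "g' \<in> carrier G" "f' = \<phi> g'" by auto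
      obtain n where n: "n > 0" "(Hilbert_Choice.inv f' \<circ> \<phi> g) ^^ n = id"
        using cdp g f' by (auto simp: coarsely_diagonal_def)
      have "(Hilbert_Choice.inv (\<psi> g') \<circ> \<psi> g) ^^ n = id"
        using cd_transfer[OF grp homp onep homs ones injp g(1) g'(1)] n g' by simp
      then show "\<exists>n>0. (Hilbert_Choice.inv h' \<circ> h) ^^ n = id"
        using n g f' g' by (auto simp: \<psi>_def)
    qed
  qed
  show "\<exists>\<psi> :: 'g \<Rightarrow> nat list \<Rightarrow> nat list.
           faithful_action d G \<psi> \<and>
           self_similar d (\<psi> ` carrier G) \<and>
           persistent d i (\<psi> ` carrier G) \<and>
           (finite_state (d - 1) (\<phi> ` carrier G) \<longrightarrow> finite_state d (\<psi> ` carrier G)) \<and>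
           (coarsely_diagonal (d - 1) (\<phi> ` carrier G) \<longrightarrow> coarsely_diagonal d (\<psi> ` carrier G))"
    using faith ss pers fs cd by blast
qed

end
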